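(* Let $l$ and $m$ be positive integers and let $q(x)=x^6-(l+m+3)x^4+(lm+l+m+3)x^2-1$. Suppose $\pm\theta_1,\pm\theta_2,\pm\theta_3$ are the six roots of $q(x)$ in its splitting field over $\mathbb{Q}$. If $q(x)$ is irreducible over $\mathbb{Q}$, then $1,\theta_1,\theta_2,\theta_3$ are linearly independent over $\mathbb{Q}$.
   Context: The roots of $q$ are simple, nonzero and real, and come in pairs $\pm\theta_j$; the labeling means the six roots are $\theta_1,-\theta_1,\theta_2,-\theta_2,\theta_3,-\theta_3$. *)

theory Defs
  imports "HOL-Computational_Algebra.Computational_Algebra"
begin

definition q_poly :: "int \<Rightarrow> int \<Rightarrow> rat poly" where
  "q_poly l m = [:-1, 0, of_int (l*m + l + m + 3), 0, - of_int (l + m + 3), 0, 1:]"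

end

theory Submission imports Defs "HOL-Computational_Algebra.Field_as_Ring" begin

definition ev :: "rat poly \<Rightarrow> complex \<Rightarrow> complex" where
  "ev p x = poly (map_poly of_rat p) x"

lemma ev_add[simp]: "ev (p + q) x = ev p x + ev q x"
proof -
  have "map_poly (of_rat :: rat \<Rightarrow> complex) (p + q) = map_poly of_rat p + map_poly of_rat q"
    by (intro poly_eqI) (simp add: coeff_map_poly of_rat_add)
  then show ?thesis by (simp add: ev_def)
qed

lemma ev_smult[simp]: "ev (smult c p) x = of_rat c * ev p x"
  by (simp add: ev_def map_poly_smult of_rat_mult)

lemma ev_pCons[simp]: "ev (pCons c p) x = of_rat c + x * ev p x"
  by (simp add: ev_def map_poly_pCons)

lemma ev_0[simp]: "ev 0 x = 0" by (simp add: ev_def)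
lemma ev_1[simp]: "ev 1 x = 1" by (simp add: ev_def)

lemma ev_mult[simp]: "ev (p * q) x = ev p x * ev q x"
  by (induction p rule: pCons_induct) (simp_all add: algebra_simps)
lemma ev_minus[simp]: "ev (- p) x = - ev p x"
proof -
  have "map_poly (of_rat :: rat \<Rightarrow> complex) (- p) = - map_poly of_rat p"
    by (intro poly_eqI) (simp add: coeff_map_poly of_rat_minus)
  then show ?thesis by (simp add: ev_def)
qed

lemma ev_diff[simp]: "ev (p - q) x = ev p x - ev q x"
  using ev_add[of p "-q" x] by simp
lemma q_dvd:
  assumes irr: "irreducible (q_poly l m)" and r: "ev (q_poly l m) t = 0" and p: "ev p t = 0"
  shows "q_poly l m dvd p"
proof (rule ccontr)
  assume "\<not> q_poly l m dvd p"
  then have "coprime (q_poly l m) p"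
    by (rule prime_elem_imp_coprime[OF field_poly_irreducible_imp_prime[OF irr]])
  then have g: "gcd (q_poly l m) p = 1" by (rule coprime_imp_gcd_eq_1)
  have "fst (bezout_coefficients (q_poly l m) p) * q_poly l m
        + snd (bezout_coefficients (q_poly l m) p) * p = gcd (q_poly l m) p"
    by (rule bezout_coefficients_fst_snd)
  then have "fst (bezout_coefficients (q_poly l m) p) * q_poly l m
        + snd (bezout_coefficients (q_poly l m) p) * p = 1" by (simp only: g)
  then have "ev (fst (bezout_coefficients (q_poly l m) p) * q_poly l m
        + snd (bezout_coefficients (q_poly l m) p) * p) t = 1" by simp
  then show False using r p by simp
qed

lemma ev_q: "ev (q_poly l m) t = t^6 - of_int (l+m+3) * t^4 + of_int (l*m+l+m+3) * t^2 - 1"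
  by (simp add: q_poly_def algebra_simps power_def eval_nat_numeral of_rat_minus of_rat_add of_rat_mult of_rat_diff)

lemma ev_neg:
  assumes irr: "irreducible (q_poly l m)" and r: "ev (q_poly l m) t = 0" and p: "ev p t = 0"
  shows "ev p (-t) = 0"
proof -
  obtain k where "p = q_poly l m * k" using q_dvd[OF assms] by blast
  moreover have "ev (q_poly l m) (-t) = 0" using r by (simp add: ev_q)
  ultimately show ?thesis by simp
qed

lemma small:
  assumes irr: "irreducible (q_poly l m)" and r: "ev (q_poly l m) t = 0"
    and "ev [:c0,c1,c2,c3,c4,c5:] t = 0"
  shows "c0 = 0 \<and> c1 = 0 \<and> c2 = 0 \<and> c3 = 0 \<and> c4 = 0 \<and> c5 = 0"
proof -
  let ?p = "[:c0,c1,c2,c3,c4,c5:]"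
  have d: "q_poly l m dvd ?p" using q_dvd[OF irr r assms(3)] .
  have dq: "degree (q_poly l m) = 6" by (simp add: q_poly_def)
  have "degree ?p \<le> 5"
    using degree_pCons_le[of c0 "[:c1,c2,c3,c4,c5:]"] degree_pCons_le[of c1 "[:c2,c3,c4,c5:]"]
      degree_pCons_le[of c2 "[:c3,c4,c5:]"] degree_pCons_le[of c3 "[:c4,c5:]"]
      degree_pCons_le[of c4 "[:c5:]"] degree_pCons_le[of c5 0]
    by simp
  note deg = this
  show ?thesis
  proof (rule ccontr)
    assume "\<not> ?thesis"
    then have "?p \<noteq> 0" by auto
    then have "degree (q_poly l m) \<le> degree ?p" by (rule dvd_imp_degree_le[OF d])
    with dq deg show False by linarith
  qed
qed

lemma key:
  fixes t p s :: complex and a0 a1 a2 a3 e :: rat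
  assumes irr: "irreducible (q_poly l m)" and r: "ev (q_poly l m) t = 0"
    and hA: "p^2 + s^2 = of_int (l+m+3) - t^2"
    and hP: "t^2 * p^2 * s^2 = 1"
    and he: "t * p * s = of_rat e" and e2: "e^2 = 1"
    and rel: "of_rat a0 + of_rat a1 * t + of_rat a2 * p + of_rat a3 * s = 0"
  shows "a0 * a1 = 0 \<and> a2 * a3 = 0"
proof -
  define A :: rat where "A = of_int (l+m+3)"
  define B :: rat where "B = of_int (l*m+l+m+3)"
  define d where "d = a2^2 - a3^2"
  define y where "y = t^2"
  define \<epsilon> where "\<epsilon> = (of_rat e :: complex)"
  have A': "(of_int (l+m+3) :: complex) = of_rat A" by (simp only: A_def of_rat_of_int_eq)
  have rq: "y^3 - of_rat A * y^2 + of_rat B * y - 1 = 0"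
    using r unfolding ev_q y_def A_def B_def
    by (simp add: of_rat_add of_rat_mult power_mult[symmetric] algebra_simps)
  have t0: "t \<noteq> 0" using r by (auto simp: ev_q)
  have y0: "y \<noteq> 0" using t0 by (simp add: y_def)
  have e0: "e \<noteq> 0" using e2 by auto
  define U where "U = 2*y*(of_rat a0^2 + of_rat a1^2*y) - y*(of_rat a2^2+of_rat a3^2)*(of_rat A - y)"
  define V where "V = 4*(of_rat a0 * of_rat a1 * y - of_rat a2 * of_rat a3 * \<epsilon>)"
  define W where "W = y * of_rat d * (p^2 - s^2)"
  define G where "G = of_rat d ^2 * (y^2 * (of_rat A - y)^2 - 4*y)"
  have hA': "p^2 + s^2 = of_rat A - y" using hA by (simp only: A' y_def)
  have h1: "of_rat a0 + of_rat a1 * t = -(of_rat a2 * p + of_rat a3 * s)"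
    using rel by (simp add: algebra_simps eq_neg_iff_add_eq_0)
  have c1: "W = U + t * V"
    unfolding W_def U_def V_def y_def \<epsilon>_def d_def
    using h1 hA' he unfolding y_def
    by (simp add: of_rat_diff of_rat_power) algebra
  have c2: "W^2 = G"
    unfolding W_def G_def using hA' hP unfolding y_def by algebra
  have c3: "U^2 + y * V^2 - G + t * (2*U*V) = 0"
    using c1 c2 unfolding y_def by algebra
  define Ut where "Ut = [:0,0, 2*a0^2 - (a2^2+a3^2)*A, 0, 2*a1^2 + (a2^2+a3^2):]"
  define Vt where "Vt = [:-4*a2*a3*e, 0, 4*a0*a1:]"
  define Gt where "Gt = [:0,0,-4*d^2, 0, A^2*d^2, 0, -2*A*d^2, 0, d^2:]"
  define Pt where "Pt = Ut*Ut + [:0,0,1:]*Vt*Vt - Gt + [:0,1:]*smult 2 (Ut*Vt)"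
  have eU: "ev Ut x = 2*x^2*(of_rat a0^2 + of_rat a1^2*x^2) - x^2*(of_rat a2^2+of_rat a3^2)*(of_rat A - x^2)" for x
    unfolding Ut_def by (simp add: of_rat_add of_rat_mult of_rat_diff of_rat_power) algebra
  have eV: "ev Vt x = 4*(of_rat a0 * of_rat a1 * x^2 - of_rat a2 * of_rat a3 * \<epsilon>)" for x
    unfolding Vt_def \<epsilon>_def by (simp add: of_rat_add of_rat_mult of_rat_diff of_rat_power of_rat_minus power2_eq_square algebra_simps)
  have eG: "ev Gt x = of_rat d ^2 * (x^2 * x^2 * (of_rat A - x^2)^2 - 4*x^2)" for x
    unfolding Gt_def by (simp add: of_rat_add of_rat_mult of_rat_diff of_rat_power of_rat_minus) algebra
  have eP: "ev Pt x = ev Ut x ^2 + x^2 * ev Vt x ^2 - ev Gt x + x * (2 * ev Ut x * ev Vt x)" for x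
    unfolding Pt_def by (simp add: power2_eq_square algebra_simps)
  have "ev Pt t = 0" using c3 unfolding eP eU eV eG U_def V_def G_def y_def by (simp add: power_mult_distrib power2_eq_square)
  then have "ev Pt (-t) = 0" using ev_neg[OF irr r] by blast
  then have c4: "U^2 + y * V^2 - G - t * (2*U*V) = 0"
    unfolding eP eU eV eG U_def V_def G_def y_def by (simp add: power_mult_distrib power2_eq_square)
  have "t * (4*U*V) = 0" using c3 c4 by algebra
  then have UV: "U = 0 \<or> V = 0" using t0 by simp
  show ?thesis
  proof (cases "V = 0")
    case True
    then have "ev [:-(a2*a3*e), 0, a0*a1, 0, 0, 0:] t = 0"
      unfolding V_def y_def \<epsilon>_def
      by (simp add: of_rat_add of_rat_mult of_rat_minus power2_eq_square algebra_simps)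
    from small[OF irr r this] have "a0*a1 = 0 \<and> a2*a3*e = 0" by simp
    then show ?thesis using e0 by simp
  next
    case False
    with UV have U0: "U = 0" by simp
    have "y * V^2 = G" using c1 c2 U0 unfolding y_def by algebra
    then have "y * (16*(of_rat (a0*a1) * y - of_rat (a2*a3*e))^2) = y * (of_rat d^2 * (y*(of_rat A - y)^2 - 4))"
      unfolding V_def G_def \<epsilon>_def by (simp add: of_rat_mult) algebra
    then have hE: "16*(of_rat (a0*a1) * y - of_rat (a2*a3*e))^2 = of_rat d^2 * (y*(of_rat A - y)^2 - 4)"
      using y0 by simp
    define c0 where "c0 = 16*(a2*a3*e)^2 + 3*d^2"
    define c2 where "c2 = -32*(a0*a1)*(a2*a3*e) + d^2*(B - A^2)"
    define c4 where "c4 = 16*(a0*a1)^2 + A*d^2"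
    have "ev [:c0, 0, c2, 0, c4, 0:] t = 0"
      using hE rq unfolding c0_def c2_def c4_def y_def
      by (simp add: of_rat_add of_rat_mult of_rat_diff of_rat_power of_rat_minus) algebra
    from small[OF irr r this] have "c0 = 0 \<and> c4 = 0" by simp
    then have cc: "16*(a2*a3*e)^2 + 3*d^2 = 0" "16*(a0*a1)^2 + A*d^2 = 0"
      unfolding c0_def c4_def by auto
    have X: "(a2*a3*e)^2 = 0 \<and> d^2 = 0"
      using cc(1) zero_le_power2[of "a2*a3*e"] zero_le_power2[of d] by linarith
    then have "(a0*a1)^2 = 0" using cc(2) by simp
    with X have "(a2*a3*e)^2 = 0 \<and> d^2 = 0 \<and> (a0*a1)^2 = 0" by simp
    then show ?thesis using e0 by simp
  qed
qed

theorem theorem2p5: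
  fixes l m :: int and \<theta>1 \<theta>2 \<theta>3 :: complex
  assumes "l > 0" and "m > 0"
    and "distinct [\<theta>1, -\<theta>1, \<theta>2, -\<theta>2, \<theta>3, -\<theta>3]"
    and "poly (map_poly of_rat (q_poly l m)) \<theta>1 = 0"
    and "poly (map_poly of_rat (q_poly l m)) \<theta>2 = 0"
    and "poly (map_poly of_rat (q_poly l m)) \<theta>3 = 0"
    and "irreducible (q_poly l m)"
  shows "\<forall>a0 a1 a2 a3 :: rat.
           of_rat a0 + of_rat a1 * \<theta>1 + of_rat a2 * \<theta>2 + of_rat a3 * \<theta>3 = 0
           \<longrightarrow> a0 = 0 \<and> a1 = 0 \<and> a2 = 0 \<and> a3 = 0"
proof (intro allI impI)
  fix a0 a1 a2 a3 :: rat
  assume rel: "of_rat a0 + of_rat a1 * \<theta>1 + of_rat a2 * \<theta>2 + of_rat a3 * \<theta>3 = 0"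
  note irr = assms(7)
  have r1: "ev (q_poly l m) \<theta>1 = 0" and r2: "ev (q_poly l m) \<theta>2 = 0"
    and r3: "ev (q_poly l m) \<theta>3 = 0" using assms(4-6) by (simp_all add: ev_def)
  define A :: complex where "A = of_int (l+m+3)"
  define B :: complex where "B = of_int (l*m+l+m+3)"
  define y1 where "y1 = \<theta>1^2"
  define y2 where "y2 = \<theta>2^2"
  define y3 where "y3 = \<theta>3^2"
  have q1: "y1^3 - A*y1^2 + B*y1 - 1 = 0" using r1 unfolding ev_q y1_def A_def B_def
    by (simp add: power_mult[symmetric])
  have q2: "y2^3 - A*y2^2 + B*y2 - 1 = 0" using r2 unfolding ev_q y2_def A_def B_def
    by (simp add: power_mult[symmetric])
  have q3: "y3^3 - A*y3^2 + B*y3 - 1 = 0" using r3 unfolding ev_q y3_def A_def B_def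
    by (simp add: power_mult[symmetric])
  have t1: "\<theta>1 \<noteq> 0" using r1 by (auto simp: ev_q)
  have t2: "\<theta>2 \<noteq> 0" using r2 by (auto simp: ev_q)
  have t3: "\<theta>3 \<noteq> 0" using r3 by (auto simp: ev_q)
  have d12: "y1 \<noteq> y2" using assms(3) unfolding y1_def y2_def by (auto simp: power2_eq_iff)
  have d13: "y1 \<noteq> y3" using assms(3) unfolding y1_def y3_def by (auto simp: power2_eq_iff)
  have d23: "y2 \<noteq> y3" using assms(3) unfolding y2_def y3_def by (auto simp: power2_eq_iff)
  have "(y1-y2)*(y1^2+y1*y2+y2^2 - A*(y1+y2)+B) = 0" using q1 q2 by algebra
  then have S12: "y1^2+y1*y2+y2^2 - A*(y1+y2)+B = 0" using d12 by simp
  have "(y1-y3)*(y1^2+y1*y3+y3^2 - A*(y1+y3)+B) = 0" using q1 q3 by algebra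
  then have S13: "y1^2+y1*y3+y3^2 - A*(y1+y3)+B = 0" using d13 by simp
  have "(y2-y3)*(y1+y2+y3-A) = 0" using S12 S13 by algebra
  then have sum: "y1+y2+y3 = A" using d23 by simp
  have prod: "y1*y2*y3 = 1" using S12 sum q1 by algebra
  define \<epsilon> where "\<epsilon> = \<theta>1*\<theta>2*\<theta>3"
  have "\<epsilon>^2 = 1" using prod unfolding \<epsilon>_def y1_def y2_def y3_def by algebra
  then have "\<epsilon> = 1 \<or> \<epsilon> = -1" by (simp add: power2_eq_1_iff)
  then obtain e :: rat where e: "\<epsilon> = of_rat e" "e^2 = 1"
    by (metis of_rat_1 of_rat_minus power2_minus power_one)
  have hA1: "\<theta>2^2 + \<theta>3^2 = of_int (l+m+3) - \<theta>1^2" using sum unfolding A_def y1_def y2_def y3_def by (simp add: eq_diff_eq algebra_simps)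
  have hA2: "\<theta>1^2 + \<theta>3^2 = of_int (l+m+3) - \<theta>2^2" using sum unfolding A_def y1_def y2_def y3_def by (simp add: eq_diff_eq algebra_simps)
  have hA3: "\<theta>1^2 + \<theta>2^2 = of_int (l+m+3) - \<theta>3^2" using sum unfolding A_def y1_def y2_def y3_def by (simp add: eq_diff_eq algebra_simps)
  have k1: "a0*a1 = 0 \<and> a2*a3 = 0"
    by (rule key[OF irr r1 hA1 _ _ e(2) rel]) (use prod e in \<open>simp_all add: \<epsilon>_def y1_def y2_def y3_def power_mult_distrib[symmetric]\<close>)
  have k2: "a0*a2 = 0 \<and> a1*a3 = 0"
    by (rule key[OF irr r2 hA2 _ _ e(2), of a0 a2 a1 a3])
       (use prod e rel in \<open>simp_all add: \<epsilon>_def y1_def y2_def y3_def algebra_simps\<close>)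
  have k3: "a0*a3 = 0 \<and> a1*a2 = 0"
    by (rule key[OF irr r3 hA3 _ _ e(2), of a0 a3 a1 a2])
       (use prod e rel in \<open>simp_all add: \<epsilon>_def y1_def y2_def y3_def algebra_simps\<close>)
  show "a0 = 0 \<and> a1 = 0 \<and> a2 = 0 \<and> a3 = 0"
  proof (cases "a0 = 0")
    case False
    with k1 k2 k3 have "a1 = 0" "a2 = 0" "a3 = 0" by auto
    with rel False show ?thesis by simp
  next
    case a0: True
    show ?thesis
    proof (cases "a1 = 0")
      case False
      with k2 k3 have "a2 = 0" "a3 = 0" by auto
      with rel a0 False t1 show ?thesis by simp
    next
      case a1: True
      show ?thesis
      proof (cases "a2 = 0")
        case False
        with k1 have "a3 = 0" by auto
        with rel a0 a1 False t2 show ?thesis by simp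
      next
        case True
        with rel a0 a1 t3 show ?thesis by simp
      qed
    qed
  qed
qed

end
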